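(* Let $R$ be a unital associative ring, $n\ge 1$, and $A=\{a_{j,k}\}\in M_n^\star(R)$. Then $\Lambda^L(A)$ is the unique matrix $B\in\widehat M_n(R)$ for which there exist invertible diagonal $n\times n$ matrices $D_1,D_2$, with the top-left entry of $D_1$ equal to $1$, such that $B=D_1^{-1}AD_2$. Similarly, $\Lambda^R(A)$ is the unique matrix $C\in\widehat M_n(R)$ for which there exist invertible diagonal $n\times n$ matrices $D_3,D_4$, with the top-left entry of $D_4$ equal to $1$, such that $C=D_3^{-1}AD_4$. In particular $\Lambda^L(A)\sim\Lambda^R(A)\sim A$ for each $A\in M_n^\star(R)$.
   Context: $R^*$ denotes the units of $R$; $M_n^\star(R)$ is the set of $n\times n$ matrices over $R$ with all entries in $R^*$. $\widehat M_n(R)=\{A=\{a_{j,k}\}\in M_n(R): a_{1,k}=a_{k,1}=1 \text{ for } 1\le k\le n\}$. For $A\in M_n^\star(R)$: $\Lambda^L(A)_{j,k}=a_{1,1}a_{j,1}^{-1}a_{j,k}a_{1,k}^{-1}$ and $\Lambda^R(A)_{j,k}=a_{j,1}^{-1}a_{j,k}a_{1,k}^{-1}a_{1,1}$. $A\sim B$ means $B=D_1^{-1}AD_2$ for some invertible diagonal matrices $D_1,D_2$. *)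

theory Defs
  imports "Jordan_Normal_Form.Matrix"
begin

definition is_unit_r :: "'a::ring_1 \<Rightarrow> bool" where
  "is_unit_r x \<longleftrightarrow> (\<exists>y. x * y = 1 \<and> y * x = 1)"

definition rinv :: "'a::ring_1 \<Rightarrow> 'a" where
  "rinv x = (THE y. x * y = 1 \<and> y * x = 1)"

text \<open>M_n^star(R): n x n matrices all of whose entries are units. Indices are 0-based,
  so the paper's index 1 is index 0 here.\<close>
definition Mstar :: "nat \<Rightarrow> 'a::ring_1 mat set" where
  "Mstar n = {A. A \<in> carrier_mat n n \<and> (\<forall>j<n. \<forall>k<n. is_unit_r (A $$ (j,k)))}"

definition Mhat :: "nat \<Rightarrow> 'a::ring_1 mat set" where
  "Mhat n = {A. A \<in> carrier_mat n n \<and> (\<forall>k<n. A $$ (0,k) = 1 \<and> A $$ (k,0) = 1)}"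

definition LambdaL :: "'a::ring_1 mat \<Rightarrow> 'a mat" where
  "LambdaL A = mat (dim_row A) (dim_col A)
     (\<lambda>(j,k). A $$ (0,0) * rinv (A $$ (j,0)) * A $$ (j,k) * rinv (A $$ (0,k)))"

definition LambdaR :: "'a::ring_1 mat \<Rightarrow> 'a mat" where
  "LambdaR A = mat (dim_row A) (dim_col A)
     (\<lambda>(j,k). rinv (A $$ (j,0)) * A $$ (j,k) * rinv (A $$ (0,k)) * A $$ (0,0))"

definition inv_diag :: "nat \<Rightarrow> 'a::ring_1 mat \<Rightarrow> bool" where
  "inv_diag n D \<longleftrightarrow> D \<in> carrier_mat n n \<and> diagonal_mat D \<and> invertible_mat D"

definition is_inverse :: "'a::ring_1 mat \<Rightarrow> 'a mat \<Rightarrow> bool" where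
  "is_inverse D E \<longleftrightarrow> inverts_mat D E \<and> inverts_mat E D"

definition diag_rel :: "nat \<Rightarrow> 'a::ring_1 mat \<Rightarrow> 'a mat \<Rightarrow> 'a mat \<Rightarrow> 'a mat \<Rightarrow> bool" where
  "diag_rel n A B D1 D2 \<longleftrightarrow> inv_diag n D1 \<and> inv_diag n D2 \<and>
     (\<exists>E. E \<in> carrier_mat n n \<and> is_inverse D1 E \<and> B = E * A * D2)"

definition dsim :: "nat \<Rightarrow> 'a::ring_1 mat \<Rightarrow> 'a mat \<Rightarrow> bool" where
  "dsim n A B \<longleftrightarrow> (\<exists>D1 D2. diag_rel n A B D1 D2)"

end

theory Submission
  imports Defs
begin

lemma unit_rinv:
  assumes "is_unit_r (x::'a::ring_1)"
  shows "x * rinv x = 1 \<and> rinv x * x = 1"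
proof -
  obtain y where y: "x * y = 1" "y * x = 1" using assms unfolding is_unit_r_def by blast
  have "\<exists>!y. x * y = 1 \<and> y * x = 1"
  proof (rule ex1I[of _ y])
    fix z assume z: "x * z = 1 \<and> z * x = 1"
    have "z = z * (x * y)" using y by simp
    also have "\<dots> = (z * x) * y" by (simp add: mult.assoc)
    finally show "z = y" using z by simp
  qed (use y in auto)
  then show ?thesis unfolding rinv_def by (rule theI')
qed

lemma rinv_simps[simp]:
  assumes "is_unit_r (x::'a::ring_1)"
  shows "x * rinv x = 1" "rinv x * x = 1" "x * (rinv x * y) = y" "rinv x * (x * y) = y"
  using unit_rinv[OF assms] by (auto simp flip: mult.assoc)

lemma rinv_left_unique:
  assumes "is_unit_r (x::'a::ring_1)" "y * x = 1" shows "y = rinv x"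
proof -
  have "y = y * (x * rinv x)" using assms by simp
  also have "\<dots> = rinv x" using assms(2) by (simp flip: mult.assoc)
  finally show ?thesis .
qed

lemma rinv_right_unique:
  assumes "is_unit_r (x::'a::ring_1)" "x * y = 1" shows "y = rinv x"
proof -
  have "y = (rinv x * x) * y" using assms by simp
  also have "\<dots> = rinv x" using assms(2) by (simp add: mult.assoc)
  finally show ?thesis .
qed

definition dg :: "nat \<Rightarrow> (nat \<Rightarrow> 'a::ring_1) \<Rightarrow> 'a mat" where
  "dg n f = mat n n (\<lambda>(i,j). if i = j then f i else 0)"

lemma dg_carrier[simp]: "dg n f \<in> carrier_mat n n" and dg_dims[simp]: "dim_row (dg n f) = n" "dim_col (dg n f) = n"
  by (auto simp: dg_def)

lemma dg_index[simp]: "i < n \<Longrightarrow> j < n \<Longrightarrow> dg n f $$ (i,j) = (if i = j then f i else 0)"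
  by (simp add: dg_def)

lemma dg_mult_left:
  assumes "M \<in> carrier_mat n m"
  shows "dg n f * M = mat n m (\<lambda>(i,j). f i * M$$(i,j))"
proof (rule eq_matI)
  fix i j assume ij: "i < dim_row (mat n m (\<lambda>(i,j). f i * M$$(i,j)))" "j < dim_col (mat n m (\<lambda>(i,j). f i * M$$(i,j)))"
  then have "i < n" "j < m" by auto
  then show "(dg n f * M) $$ (i,j) = mat n m (\<lambda>(i,j). f i * M$$(i,j)) $$ (i,j)"
    using assms by (simp add: scalar_prod_def dg_def row_def col_def if_distrib[where f="\<lambda>x. x * _"] cong: if_cong)
qed (use assms in auto)

lemma dg_mult_right:
  assumes "M \<in> carrier_mat m n"
  shows "M * dg n f = mat m n (\<lambda>(i,j). M$$(i,j) * f j)"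
proof (rule eq_matI)
  fix i j assume ij: "i < dim_row (mat m n (\<lambda>(i,j). M$$(i,j) * f j))" "j < dim_col (mat m n (\<lambda>(i,j). M$$(i,j) * f j))"
  then have "i < m" "j < n" by auto
  then show "(M * dg n f) $$ (i,j) = mat m n (\<lambda>(i,j). M$$(i,j) * f j) $$ (i,j)"
    using assms by (simp add: scalar_prod_def dg_def row_def col_def if_distrib[where f="\<lambda>x. _ * x"] cong: if_cong)
qed (use assms in auto)

lemma dg_triple:
  assumes "M \<in> carrier_mat n n"
  shows "dg n e * M * dg n f = mat n n (\<lambda>(j,k). e j * M$$(j,k) * f k)"
proof -
  have "dg n e * M = mat n n (\<lambda>(i,j). e i * M$$(i,j))" by (rule dg_mult_left[OF assms])
  moreover have "mat n n (\<lambda>(i,j). e i * M$$(i,j)) * dg n f = mat n n (\<lambda>(i,j). mat n n (\<lambda>(i,j). e i * M$$(i,j)) $$ (i,j) * f j)"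
    by (rule dg_mult_right) simp
  ultimately show ?thesis by (auto intro!: eq_matI)
qed

lemma dg_inv:
  assumes "\<And>i. i < n \<Longrightarrow> f i * g i = 1 \<and> g i * f i = 1"
  shows "inv_diag n (dg n f) \<and> is_inverse (dg n f) (dg n g)"
proof -
  have 1: "dg n f * dg n g = 1\<^sub>m n"
    by (subst dg_mult_left[OF dg_carrier], rule eq_matI) (auto simp: assms)
  have 2: "dg n g * dg n f = 1\<^sub>m n"
    by (subst dg_mult_left[OF dg_carrier], rule eq_matI) (auto simp: assms)
  show ?thesis using 1 2
    unfolding inv_diag_def is_inverse_def invertible_mat_def inverts_mat_def diagonal_mat_def
    by auto
qed

lemma diag_rel_entries:
  assumes "diag_rel n A B D1 D2" "A \<in> carrier_mat n n"
  obtains e where "B = mat n n (\<lambda>(j,k). e j * A$$(j,k) * D2$$(k,k))"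
    "\<And>i. i < n \<Longrightarrow> e i * D1$$(i,i) = 1"
proof -
  from assms obtain E where E: "E \<in> carrier_mat n n" "is_inverse D1 E" "B = E * A * D2"
    and D1: "inv_diag n D1" and D2: "inv_diag n D2" unfolding diag_rel_def by blast
  have dgD: "D = dg n (\<lambda>k. D$$(k,k))" if "inv_diag n D" for D
    using that unfolding inv_diag_def diagonal_mat_def
    by (intro eq_matI) auto
  have D1E: "D1 * E = 1\<^sub>m n" and ED1: "E * D1 = 1\<^sub>m n"
    using E D1 unfolding is_inverse_def inverts_mat_def inv_diag_def by auto
  have a: "dg n (\<lambda>k. D1$$(k,k)) * E = 1\<^sub>m n" using D1E dgD[OF D1] by simp
  have b: "E * dg n (\<lambda>k. D1$$(k,k)) = 1\<^sub>m n" using ED1 dgD[OF D1] by simp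
  have a': "D1$$(i,i) * E$$(i,j) = (if i = j then 1 else 0)" if "i<n" "j<n" for i j
  proof -
    have "(dg n (\<lambda>k. D1$$(k,k)) * E) $$ (i,j) = 1\<^sub>m n $$ (i,j)" using a by simp
    then show ?thesis using that E by (simp add: dg_mult_left[OF E(1)])
  qed
  have b': "E$$(i,j) * D1$$(j,j) = (if i = j then 1 else 0)" if "i<n" "j<n" for i j
  proof -
    have "(E * dg n (\<lambda>k. D1$$(k,k))) $$ (i,j) = 1\<^sub>m n $$ (i,j)" using b by simp
    then show ?thesis using that E by (simp add: dg_mult_right[OF E(1)])
  qed
  have Ez: "E$$(i,j) = 0" if "i<n" "j<n" "i \<noteq> j" for i j
  proof -
    have "E$$(i,j) = (E$$(i,i) * D1$$(i,i)) * E$$(i,j)" using b'[of i i] that by simp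
    also have "\<dots> = E$$(i,i) * (D1$$(i,i) * E$$(i,j))" by (simp add: mult.assoc)
    also have "\<dots> = 0" using a'[of i j] that by simp
    finally show ?thesis .
  qed
  have Edg: "E = dg n (\<lambda>k. E$$(k,k))"
    using E Ez by (intro eq_matI) auto
  have "B = dg n (\<lambda>k. E$$(k,k)) * A * dg n (\<lambda>k. D2$$(k,k))"
    using E(3) Edg dgD[OF D2] by metis
  also have "\<dots> = mat n n (\<lambda>(j,k). E$$(j,j) * A$$(j,k) * D2$$(k,k))"
    by (rule dg_triple[OF assms(2)])
  finally show ?thesis using that[of "\<lambda>k. E$$(k,k)"] b' by simp
qed

theorem lemma2:
  fixes A :: "'a::ring_1 mat" and n :: nat
  assumes "n \<ge> 1" and "A \<in> Mstar n"
  shows "LambdaL A \<in> Mhat n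
      \<and> (\<exists>D1 D2. diag_rel n A (LambdaL A) D1 D2 \<and> D1 $$ (0,0) = 1)
      \<and> (\<forall>B \<in> Mhat n. (\<exists>D1 D2. diag_rel n A B D1 D2 \<and> D1 $$ (0,0) = 1) \<longrightarrow> B = LambdaL A)
      \<and> LambdaR A \<in> Mhat n
      \<and> (\<exists>D3 D4. diag_rel n A (LambdaR A) D3 D4 \<and> D4 $$ (0,0) = 1)
      \<and> (\<forall>C \<in> Mhat n. (\<exists>D3 D4. diag_rel n A C D3 D4 \<and> D4 $$ (0,0) = 1) \<longrightarrow> C = LambdaR A)
      \<and> dsim n (LambdaL A) (LambdaR A) \<and> dsim n (LambdaR A) A"
proof -
  have Ac: "A \<in> carrier_mat n n" using assms(2) unfolding Mstar_def by auto
  have U: "\<And>j k. j < n \<Longrightarrow> k < n \<Longrightarrow> is_unit_r (A$$(j,k))"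
    using assms(2) unfolding Mstar_def by auto
  have n0: "0 < n" using assms(1) by simp
  have U0: "\<And>j. j < n \<Longrightarrow> is_unit_r (A$$(j,0))" "\<And>k. k < n \<Longrightarrow> is_unit_r (A$$(0,k))"
    "is_unit_r (A$$(0,0))" using U n0 by auto
  have dA: "dim_row A = n" "dim_col A = n" using Ac by auto
  have LL: "LambdaL A = mat n n (\<lambda>(j,k). A$$(0,0) * (rinv (A$$(j,0)) * (A$$(j,k) * rinv (A$$(0,k)))))"
    unfolding LambdaL_def dA by (simp add: mult.assoc)
  have LR: "LambdaR A = mat n n (\<lambda>(j,k). rinv (A$$(j,0)) * (A$$(j,k) * (rinv (A$$(0,k)) * A$$(0,0))))"
    unfolding LambdaR_def dA by (simp add: mult.assoc)
  have LLc: "LambdaL A \<in> carrier_mat n n" and LRc: "LambdaR A \<in> carrier_mat n n"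
    unfolding LL LR by auto
  define a where "a = A$$(0,0)"
  have ua: "is_unit_r a" using U0 a_def by simp
  have P1: "LambdaL A \<in> Mhat n"
    unfolding Mhat_def LL using U0 n0 by (auto simp: a_def[symmetric])
  have P4: "LambdaR A \<in> Mhat n"
    unfolding Mhat_def LR using U0 n0 by (auto simp: a_def[symmetric])
  have P2: "\<exists>D1 D2. diag_rel n A (LambdaL A) D1 D2 \<and> D1 $$ (0,0) = 1"
  proof (intro exI conjI)
    let ?D1 = "dg n (\<lambda>j. A$$(j,0) * rinv a)" and ?E = "dg n (\<lambda>j. a * rinv (A$$(j,0)))"
      and ?D2 = "dg n (\<lambda>k. rinv (A$$(0,k)))"
    have i1: "inv_diag n ?D1 \<and> is_inverse ?D1 ?E"
      by (rule dg_inv) (simp add: U0 ua mult.assoc)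
    have i2: "inv_diag n ?D2 \<and> is_inverse ?D2 (dg n (\<lambda>k. A$$(0,k)))"
      by (rule dg_inv) (simp add: U0)
    have "LambdaL A = ?E * A * ?D2"
      unfolding LL a_def
      unfolding dg_triple[OF Ac] by (rule eq_matI) (simp_all add: mult.assoc)
    then show "diag_rel n A (LambdaL A) ?D1 ?D2"
      unfolding diag_rel_def using i1 i2 dg_carrier by blast
    show "?D1 $$ (0,0) = 1" using n0 U0 by (simp add: a_def)
  qed
  have P5: "\<exists>D3 D4. diag_rel n A (LambdaR A) D3 D4 \<and> D4 $$ (0,0) = 1"
  proof (intro exI conjI)
    let ?D1 = "dg n (\<lambda>j. A$$(j,0))" and ?E = "dg n (\<lambda>j. rinv (A$$(j,0)))"
      and ?D2 = "dg n (\<lambda>k. rinv (A$$(0,k)) * a)"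
    have i1: "inv_diag n ?D1 \<and> is_inverse ?D1 ?E"
      by (rule dg_inv) (simp add: U0)
    have i2: "inv_diag n ?D2 \<and> is_inverse ?D2 (dg n (\<lambda>k. rinv a * A$$(0,k)))"
      by (rule dg_inv) (simp add: U0 ua mult.assoc)
    have "LambdaR A = ?E * A * ?D2"
      unfolding LR a_def
      unfolding dg_triple[OF Ac] by (rule eq_matI) (simp_all add: mult.assoc)
    then show "diag_rel n A (LambdaR A) ?D1 ?D2"
      unfolding diag_rel_def using i1 i2 dg_carrier by blast
    show "?D2 $$ (0,0) = 1" using n0 U0 by (simp add: a_def)
  qed
  have P3: "\<forall>B \<in> Mhat n. (\<exists>D1 D2. diag_rel n A B D1 D2 \<and> D1 $$ (0,0) = 1) \<longrightarrow> B = LambdaL A"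
  proof (intro ballI impI)
    fix B assume B: "B \<in> Mhat n" and "\<exists>D1 D2. diag_rel n A B D1 D2 \<and> D1 $$ (0,0) = 1"
    then obtain D1 D2 where R: "diag_rel n A B D1 D2" and d0: "D1 $$ (0,0) = 1" by blast
    obtain e where Be: "B = mat n n (\<lambda>(j,k). e j * A$$(j,k) * D2$$(k,k))"
      and e: "\<And>i. i < n \<Longrightarrow> e i * D1$$(i,i) = 1" using diag_rel_entries[OF R Ac] by blast
    have e0: "e 0 = 1" using e[OF n0] d0 by simp
    have f: "D2$$(k,k) = rinv (A$$(0,k))" if "k < n" for k
    proof -
      have "B $$ (0,k) = 1" using B that unfolding Mhat_def by auto
      then have "A$$(0,k) * D2$$(k,k) = 1" using that n0 e0 by (simp add: Be)
      then show ?thesis by (rule rinv_right_unique[OF U0(2)[OF that]])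
    qed
    have ej: "e j = a * rinv (A$$(j,0))" if "j < n" for j
    proof -
      have "B $$ (j,0) = 1" using B that unfolding Mhat_def by auto
      then have h: "e j * (A$$(j,0) * rinv a) = 1" using that n0 f[OF n0] by (simp add: Be a_def mult.assoc)
      have "e j = e j * ((A$$(j,0) * rinv a) * (a * rinv (A$$(j,0))))"
        using ua U0(1)[OF that] by (simp add: mult.assoc)
      also have "\<dots> = a * rinv (A$$(j,0))" using h by (simp flip: mult.assoc)
      finally show ?thesis .
    qed
    show "B = LambdaL A"
      unfolding Be LL using ej f by (auto intro!: eq_matI simp: a_def mult.assoc)
  qed
  have P6: "\<forall>C \<in> Mhat n. (\<exists>D3 D4. diag_rel n A C D3 D4 \<and> D4 $$ (0,0) = 1) \<longrightarrow> C = LambdaR A"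
  proof (intro ballI impI)
    fix B assume B: "B \<in> Mhat n" and "\<exists>D1 D2. diag_rel n A B D1 D2 \<and> D2 $$ (0,0) = 1"
    then obtain D1 D2 where R: "diag_rel n A B D1 D2" and d0: "D2 $$ (0,0) = 1" by blast
    obtain e where Be: "B = mat n n (\<lambda>(j,k). e j * A$$(j,k) * D2$$(k,k))"
      using diag_rel_entries[OF R Ac] by blast
    have ej: "e j = rinv (A$$(j,0))" if "j < n" for j
    proof -
      have "B $$ (j,0) = 1" using B that unfolding Mhat_def by auto
      then have "e j * A$$(j,0) = 1" using that n0 d0 by (simp add: Be)
      then show ?thesis by (rule rinv_left_unique[OF U0(1)[OF that]])
    qed
    have f: "D2$$(k,k) = rinv (A$$(0,k)) * a" if "k < n" for k
    proof -
      have "B $$ (0,k) = 1" using B that unfolding Mhat_def by auto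
      then have h: "(rinv a * A$$(0,k)) * D2$$(k,k) = 1" using that n0 ej[OF n0] by (simp add: Be a_def)
      have "D2$$(k,k) = ((rinv (A$$(0,k)) * a) * (rinv a * A$$(0,k))) * D2$$(k,k)"
        using ua U0(2)[OF that] by (simp add: mult.assoc)
      also have "\<dots> = rinv (A$$(0,k)) * a" using h by (simp add: mult.assoc)
      finally show ?thesis .
    qed
    show "B = LambdaR A"
      unfolding Be LR using ej f by (auto intro!: eq_matI simp: a_def mult.assoc)
  qed
  have P7: "dsim n (LambdaL A) (LambdaR A)"
    unfolding dsim_def
  proof (intro exI)
    let ?D1 = "dg n (\<lambda>j. a)" and ?E = "dg n (\<lambda>j. rinv a)"
    have i1: "inv_diag n ?D1 \<and> is_inverse ?D1 ?E" by (rule dg_inv) (simp add: ua)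
    have "LambdaR A = ?E * LambdaL A * ?D1"
      unfolding LR
      unfolding dg_triple[OF LLc] by (rule eq_matI) (simp_all add: mult.assoc LL a_def U0)
    then show "diag_rel n (LambdaL A) (LambdaR A) ?D1 ?D1"
      unfolding diag_rel_def using i1 dg_carrier by blast
  qed
  have P8: "dsim n (LambdaR A) A"
    unfolding dsim_def
  proof (intro exI)
    let ?D1 = "dg n (\<lambda>j. rinv (A$$(j,0)))" and ?E = "dg n (\<lambda>j. A$$(j,0))"
      and ?D2 = "dg n (\<lambda>k. rinv a * A$$(0,k))"
    have i1: "inv_diag n ?D1 \<and> is_inverse ?D1 ?E" by (rule dg_inv) (simp add: U0)
    have i2: "inv_diag n ?D2 \<and> is_inverse ?D2 (dg n (\<lambda>k. rinv (A$$(0,k)) * a))"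
      by (rule dg_inv) (simp add: U0 ua mult.assoc)
    have "A = ?E * LambdaR A * ?D2"
      unfolding dg_triple[OF LRc] by (rule eq_matI) (simp_all add: mult.assoc LR a_def U0 dA)
    then show "diag_rel n (LambdaR A) A ?D1 ?D2"
      unfolding diag_rel_def using i1 i2 dg_carrier by blast
  qed
  show ?thesis using P1 P2 P3 P4 P5 P6 P7 P8 by blast
qed

end
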